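(* Let $n\ge2$, let $0<f_1\le\dots\le f_n$ and $F_j=\sum_{i=1}^j f_i$. For $k\in\{1,\ldots,n-1\}$ let $X_k=1/(F_{n-k}+Z_k)^2$ where $Z_k\sim\Gamma\big(k,e\binom n2/k\big)$. Then for any $k\in\{1,\ldots,n-1\}$, $$\mathbb{E}[X_k]\le O\left(\frac{n^4F_{n-k}+kn^2}{n^4F_{n-k}^3+k^4F_{n-k}}\right).$$
   Context: $\Gamma(k,\lambda)$ denotes the distribution of the sum of $k$ independent exponential random variables with rate $\lambda$, i.e. density $\lambda^k x^{k-1}e^{-\lambda x}/(k-1)!$ on $x>0$. *)

theory Defs
  imports "HOL-Probability.Probability"
begin

text \<open>Gamma(k,l) distribution (sum of k independent Exp(l)), for k \<ge> 1:
  the library's Erlang density with shape index k-1.\<close>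
definition gamma_distr :: "nat \<Rightarrow> real \<Rightarrow> real measure" where
  "gamma_distr k l = density lborel (erlang_density (k - 1) l)"

end

theory Submission
  imports Defs
begin
lemma pow_fact_le_exp: fixes x::real assumes "0 \<le> x" shows "x^m / fact m \<le> exp x"
proof -
  have s: "(\<lambda>n. x^n / fact n) sums exp x" using exp_converges[of x] by (simp add: divide_inverse mult.commute)
  have "(\<Sum>n\<in>{m}. x^n / fact n) \<le> suminf (\<lambda>n. x^n / fact n)"
    by (rule sum_le_suminf) (use s assms in \<open>auto simp: sums_iff\<close>)
  then show ?thesis using s by (simp add: sums_iff)
qed

lemma erl_le: assumes "0 < l" shows "erlang_density m l z \<le> l"
proof (cases "z < 0")
  case True then show ?thesis using assms by (simp add: erlang_density_def)
next
  case False
  have e: "(l*z)^m / fact m \<le> exp (l*z)" using False assms by (intro pow_fact_le_exp) simp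
  have "erlang_density m l z = l * ((l*z)^m / fact m) * exp (- l * z)"
    using False by (simp add: erlang_density_def power_mult_distrib)
  also have "\<dots> \<le> l * exp (l*z) * exp (- l * z)"
    using e assms by (intro mult_right_mono mult_left_mono) auto
  also have "\<dots> = l" by (simp add: exp_minus field_simps)
  finally show ?thesis .
qed

lemma erl_int1: assumes "0 < l" shows "(\<integral>\<^sup>+ z. ennreal (erlang_density m l z) \<partial>lborel) = 1"
  using nn_integral_erlang_ith_moment[OF assms, of m 0] by simp

lemma bound1: assumes "0 < l" "0 < F"
  shows "(\<integral>\<^sup>+ z. ennreal (erlang_density m l z) * ennreal (1/(F+z)^2) \<partial>lborel) \<le> ennreal (1/F^2)"
proof -
  have "(\<integral>\<^sup>+ z. ennreal (erlang_density m l z) * ennreal (1/(F+z)^2) \<partial>lborel)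
      \<le> (\<integral>\<^sup>+ z. ennreal (erlang_density m l z) * ennreal (1/F^2) \<partial>lborel)"
  proof (intro nn_integral_mono)
    fix z :: real
    show "ennreal (erlang_density m l z) * ennreal (1/(F+z)^2) \<le> ennreal (erlang_density m l z) * ennreal (1/F^2)"
    proof (cases "z < 0")
      case True then show ?thesis by (simp add: erlang_density_def)
    next
      case False
      have "1/(F+z)^2 \<le> 1/F^2" using False assms
        by (intro divide_left_mono power_mono mult_pos_pos) auto
      then show ?thesis by (intro mult_left_mono ennreal_leI) auto
    qed
  qed
  also have "\<dots> = (\<integral>\<^sup>+ z. ennreal (erlang_density m l z) \<partial>lborel) * ennreal (1/F^2)"
    by (rule nn_integral_multc) simp
  also have "\<dots> = ennreal (1/F^2)" using erl_int1[OF assms(1)] by simp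
  finally show ?thesis .
qed

lemma bound2: assumes "0 < l" "0 < F"
  shows "(\<integral>\<^sup>+ z. ennreal (erlang_density m l z) * ennreal (1/(F+z)^2) \<partial>lborel) \<le> ennreal (l/F)"
proof -
  have "(\<integral>\<^sup>+ z. ennreal (erlang_density m l z) * ennreal (1/(F+z)^2) \<partial>lborel)
      \<le> (\<integral>\<^sup>+ z. ennreal l * (ennreal (1/(F+z)^2) * indicator {0..} z) \<partial>lborel)"
  proof (intro nn_integral_mono)
    fix z :: real
    show "ennreal (erlang_density m l z) * ennreal (1/(F+z)^2) \<le> ennreal l * (ennreal (1/(F+z)^2) * indicator {0..} z)"
    proof (cases "z < 0")
      case True then show ?thesis by (simp add: erlang_density_def)
    next
      case False
      then show ?thesis using erl_le[OF assms(1), of m z]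
        by (auto intro!: mult_right_mono ennreal_leI)
    qed
  qed
  also have "\<dots> = ennreal l * (\<integral>\<^sup>+ z. ennreal (1/(F+z)^2) * indicator {0..} z \<partial>lborel)"
    by (rule nn_integral_cmult) simp
  also have "(\<integral>\<^sup>+ z. ennreal (1/(F+z)^2) * indicator {0..} z \<partial>lborel) = ennreal (0 - (- 1/(F+0)))"
  proof (rule nn_integral_FTC_atLeast)
    show "(\<lambda>z. 1/(F+z)^2) \<in> borel_measurable borel" by measurable
    fix x :: real assume x: "0 \<le> x"
    have "F + x \<noteq> 0" using x assms by auto
    then show "((\<lambda>z. - 1/(F+z)) has_real_derivative 1/(F+x)^2) (at x)"
      by (auto intro!: derivative_eq_intros simp: power2_eq_square)
    show "0 \<le> 1/(F+x)^2" by simp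
  next
    show "((\<lambda>z. - 1/(F+z)) \<longlongrightarrow> 0) at_top" by real_asymp
  qed
  also have "ennreal l * ennreal (0 - (- 1/(F+0))) = ennreal (l/F)"
    using assms by (simp add: ennreal_mult'[symmetric])
  finally show ?thesis .
qed

lemma bound3: assumes "0 < l" "0 < F"
  shows "(\<integral>\<^sup>+ z. ennreal (erlang_density (m+2) l z) * ennreal (1/(F+z)^2) \<partial>lborel)
     \<le> ennreal (l^2/((real m+2)*(real m+1)))"
proof -
  let ?c = "l^2/((real m+2)*(real m+1))"
  have "(\<integral>\<^sup>+ z. ennreal (erlang_density (m+2) l z) * ennreal (1/(F+z)^2) \<partial>lborel)
      \<le> (\<integral>\<^sup>+ z. ennreal (erlang_density m l z) * ennreal ?c \<partial>lborel)"
  proof (intro nn_integral_mono)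
    fix z :: real
    show "ennreal (erlang_density (m+2) l z) * ennreal (1/(F+z)^2) \<le> ennreal (erlang_density m l z) * ennreal ?c"
    proof (cases "z \<le> 0")
      case True then show ?thesis by (auto simp: erlang_density_def)
    next
      case False
      have fa: "fact (m+2) = (real m+2)*(real m+1)* (fact m::real)"
        by (simp add: algebra_simps)
      have "erlang_density (m+2) l z * (1/(F+z)^2) \<le> erlang_density (m+2) l z * (1/z^2)"
        using False assms by (intro mult_left_mono divide_left_mono power_mono) auto
      also have "\<dots> = erlang_density m l z * ?c"
        using False by (simp add: erlang_density_def fa field_simps power2_eq_square)
      finally show ?thesis using assms False
        by (simp add: ennreal_mult'[symmetric] ennreal_leI)
    qed
  qed
  also have "\<dots> = (\<integral>\<^sup>+ z. ennreal (erlang_density m l z) \<partial>lborel) * ennreal ?c"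
    by (rule nn_integral_multc) simp
  also have "\<dots> = ennreal ?c" using erl_int1[OF assms(1)] by simp
  finally show ?thesis .
qed

lemma arith_main:
  fixes N K F l E :: real
  assumes N: "2 \<le> N" and K1: "1 \<le> K" and KN: "K \<le> N" and F: "0 < F"
    and l: "l \<le> 3 * N^2 / (2*K)" and l0: "0 < l"
    and E1: "E \<le> 1/F^2" and E2: "E \<le> l/F"
    and E3: "3 \<le> K \<Longrightarrow> E \<le> l^2/((K-1)*(K-2))"
  shows "E \<le> 100 * ((N^4 * F + K * N^2) / (N^4 * F^3 + K^4 * F))"
proof -
  have D: "0 < N^4 * F^3 + K^4 * F" using F N K1 by (intro add_pos_pos) auto
  have R1: "100 * N^4 * F \<le> 100 * (N^4 * F + K * N^2)" using K1 N by simp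
  have R2: "100 * K * N^2 \<le> 100 * (N^4 * F + K * N^2)" using F N by simp
  have P: "0 \<le> N^4 * F" using F N by simp
  have goal: "E * (N^4 * F^3 + K^4 * F) \<le> 100 * (N^4 * F + K * N^2)"
  proof (cases "K^4 \<le> N^4 * F^2")
    case True
    have "E * (N^4 * F^3 + K^4 * F) \<le> (1/F^2) * (N^4 * F^3 + K^4 * F)"
      using E1 D by (intro mult_right_mono) auto
    also have "\<dots> = N^4 * F + K^4 / F" using F by (simp add: field_simps power2_eq_square power3_eq_cube)
    also have "K^4 / F \<le> N^4 * F^2 / F" using True F by (intro divide_right_mono) auto
    also have "N^4 * F^2 / F = N^4 * F" using F by (simp add: power2_eq_square)
    finally show ?thesis using R1 P by linarith
  next
    case False
    have D2: "N^4 * F^3 + K^4 * F \<le> 2 * K^4 * F"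
    proof -
      have "N^4 * F^3 = (N^4 * F^2) * F" by (simp add: power2_eq_square power3_eq_cube)
      also have "\<dots> \<le> K^4 * F" using False F by (intro mult_right_mono) auto
      finally show ?thesis by linarith
    qed
    show ?thesis
    proof (cases "3 \<le> K")
      case True
      have E0: "E \<le> l^2/((K-1)*(K-2))" using E3 True by simp
      have "l^2 \<le> (3 * N^2 / (2*K))^2" using l l0 by (intro power_mono) auto
      also have "\<dots> = 9 * N^4 / (4 * K^2)" by (simp add: power_divide power_mult_distrib)
      finally have l2: "l^2 \<le> 9 * N^4 / (4 * K^2)" .
      have kk: "K^2 / 6 \<le> (K-1)*(K-2)"
      proof -
        have "0 \<le> (K-3)*(5*K-3)" using True by (intro mult_nonneg_nonneg) auto
        then show ?thesis by (simp add: power2_eq_square algebra_simps)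
      qed
      have "l^2/((K-1)*(K-2)) \<le> (9 * N^4 / (4 * K^2)) / (K^2/6)"
        using True l2 kk by (intro frac_le) auto
      also have "\<dots> = 27/2 * N^4 / K^4" using True by (simp add: field_simps power2_eq_square) (simp add: power4_eq_xxxx)
      finally have E4: "E \<le> 27/2 * N^4 / K^4" using E0 by linarith
      have "E * (N^4 * F^3 + K^4 * F) \<le> (27/2 * N^4 / K^4) * (2 * K^4 * F)"
        proof -
        have "E * (N^4 * F^3 + K^4 * F) \<le> (27/2 * N^4 / K^4) * (N^4 * F^3 + K^4 * F)"
          using E4 D by (intro mult_right_mono) auto
        also have "\<dots> \<le> (27/2 * N^4 / K^4) * (2 * K^4 * F)"
          using D2 by (intro mult_left_mono) auto
        finally show ?thesis .
      qed
      also have "\<dots> = 27 * N^4 * F" using True by (simp add: field_simps)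
      finally show ?thesis using R1 P by linarith
    next
      case False
      have E5: "E \<le> 3 * N^2 / (2*K*F)"
      proof -
        have "l / F \<le> (3 * N^2 / (2*K)) / F" using l F by (intro divide_right_mono) auto
        then show ?thesis using E2 by simp
      qed
      have "E * (N^4 * F^3 + K^4 * F) \<le> (3 * N^2 / (2*K*F)) * (2 * K^4 * F)"
        proof -
        have "E * (N^4 * F^3 + K^4 * F) \<le> (3 * N^2 / (2*K*F)) * (N^4 * F^3 + K^4 * F)"
          using E5 D by (intro mult_right_mono) auto
        also have "\<dots> \<le> (3 * N^2 / (2*K*F)) * (2 * K^4 * F)"
          using D2 K1 F by (intro mult_left_mono) auto
        finally show ?thesis .
      qed
      also have "\<dots> = 3 * N^2 * K^3" using K1 F by (simp add: field_simps power3_eq_cube power4_eq_xxxx)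
      also have "\<dots> \<le> 3 * N^2 * (9 * K)"
      proof -
        have "K*K \<le> 3*3" using False K1 by (intro mult_mono) auto
        then have "K*K*K \<le> 9*K" using K1 by (intro mult_right_mono[where c=K, of "K*K" 9, simplified]) auto
        then have "K^3 \<le> 9 * K" by (simp add: power3_eq_cube)
        then show ?thesis using N by (intro mult_left_mono) auto
      qed
      finally have "E * (N^4 * F^3 + K^4 * F) \<le> 27 * (K * N^2)" by (simp add: algebra_simps)
      moreover have "100 * K * N^2 = 100 * (K * N^2)" by simp
      moreover have "0 \<le> K * N^2" using K1 by simp
      ultimately show ?thesis using R2 by linarith
    qed
  qed
  have "E \<le> (100 * (N^4 * F + K * N^2)) / (N^4 * F^3 + K^4 * F)"
    using goal D by (simp add: pos_le_divide_eq)
  then show ?thesis by simp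
qed

theorem lemma14:
  shows "\<exists>C>0. \<forall>(n::nat) (f::nat \<Rightarrow> real) (k::nat).
    2 \<le> n \<longrightarrow>
    (\<forall>i\<in>{1..n}. 0 < f i) \<longrightarrow>
    (\<forall>i j. 1 \<le> i \<longrightarrow> i \<le> j \<longrightarrow> j \<le> n \<longrightarrow> f i \<le> f j) \<longrightarrow>
    k \<in> {1..n-1} \<longrightarrow>
    (let F = (\<Sum>i=1..n-k. f i);
         l = exp 1 * real (n choose 2) / real k
     in (\<integral>z. 1 / (F + z)^2 \<partial>gamma_distr k l)
        \<le> C * ((real n^4 * F + real k * real n^2) / (real n^4 * F^3 + real k^4 * F)))"
proof (intro exI[of _ 100] conjI allI impI)
  fix n :: nat and f :: "nat \<Rightarrow> real" and k :: nat
  assume n2: "2 \<le> n" and fpos: "\<forall>i\<in>{1..n}. 0 < f i" and k: "k \<in> {1..n-1}"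
  define F where "F = (\<Sum>i=1..n-k. f i)"
  define l where "l = exp 1 * real (n choose 2) / real k"
  have k1: "1 \<le> k" and kn: "k \<le> n - 1" using k by auto
  have Fpos: "0 < F" unfolding F_def
    using fpos kn k1 by (intro sum_pos) auto
  have c2: "2 * (n choose 2) = n * (n - 1)"
    by (metis Groups.mult_ac(2) choose_two dvd_div_mult_self dvd_refl
    even_mult_iff odd_two_times_div_two_nat)
  have c2r: "real (n choose 2) = real n * (real n - 1) / 2"
  proof -
    have "real (2 * (n choose 2)) = real (n * (n - 1))" using c2 by simp
    then show ?thesis using n2 by (simp add: of_nat_diff)
  qed
  have cpos: "0 < real n * (real n - 1)" using n2 by simp
  have c0: "0 < real (n choose 2)" using c2r cpos n2 by simp
  have l0: "0 < l" unfolding l_def using c0 k1 by (intro divide_pos_pos mult_pos_pos) auto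
  have lb: "l \<le> 3 * real n^2 / (2 * real k)"
  proof -
    have "l = exp 1 * (real n * (real n - 1)) / (2 * real k)" unfolding l_def c2r by simp
    also have "\<dots> \<le> 3 * real n^2 / (2 * real k)"
    proof (intro divide_right_mono)
      have "exp 1 * (real n * (real n - 1)) \<le> 3 * (real n * (real n - 1))"
        using exp_le cpos by (intro mult_right_mono) auto
      also have "\<dots> \<le> 3 * real n^2" by (simp add: power2_eq_square algebra_simps)
      finally show "exp 1 * (real n * (real n - 1)) \<le> 3 * real n^2" .
    qed simp
    finally show ?thesis .
  qed
  define I where "I = (\<integral>\<^sup>+ z. ennreal (erlang_density (k-1) l z) * ennreal (1/(F+z)^2) \<partial>lborel)"
  have EI: "(\<integral>z. 1 / (F + z)^2 \<partial>gamma_distr k l) = enn2real I"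
  proof -
    have "(\<integral>z. 1 / (F + z)^2 \<partial>gamma_distr k l)
        = enn2real (\<integral>\<^sup>+ z. ennreal (1 / (F + z)^2) \<partial>gamma_distr k l)"
      by (rule integral_eq_nn_integral) (auto simp: gamma_distr_def)
    also have "(\<integral>\<^sup>+ z. ennreal (1 / (F + z)^2) \<partial>gamma_distr k l) = I"
      unfolding gamma_distr_def I_def
      by (rule nn_integral_density) (use l0 in auto)
    finally show ?thesis .
  qed
  have bnd: "enn2real I \<le> B" if "I \<le> ennreal B" "0 \<le> B" for B
  proof -
    have "enn2real I \<le> enn2real (ennreal B)"
      using that by (intro enn2real_mono) auto
    then show ?thesis using that by simp
  qed
  have E1: "enn2real I \<le> 1/F^2" by (rule bnd) (use bound1[OF l0 Fpos, of "k-1"] in \<open>auto simp: I_def\<close>)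
  have E2: "enn2real I \<le> l/F" by (rule bnd) (use bound2[OF l0 Fpos, of "k-1"] l0 Fpos in \<open>auto simp: I_def\<close>)
  have E3: "enn2real I \<le> l^2/((real k-1)*(real k-2))" if "3 \<le> real k"
  proof -
    have k3: "3 \<le> k" using that by simp
    define m where "m = k - 3"
    have m: "k - 1 = m + 2" "real k = real m + 3" using k3 by (auto simp: m_def of_nat_diff)
    have "enn2real I \<le> l^2/((real m+2)*(real m+1))"
    proof (rule bnd)
      show "I \<le> ennreal (l^2/((real m+2)*(real m+1)))"
        unfolding I_def m(1) by (rule bound3[OF l0 Fpos])
    qed (use l0 in auto)
    then show ?thesis using m(2) by (simp add: algebra_simps)
  qed
  have "enn2real I \<le> 100 * ((real n^4 * F + real k * real n^2) / (real n^4 * F^3 + real k^4 * F))"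
    by (rule arith_main[OF _ _ _ Fpos lb l0 E1 E2 E3]) (use n2 k1 kn in auto)
  then show "let F = (\<Sum>i=1..n-k. f i); l = exp 1 * real (n choose 2) / real k
     in (\<integral>z. 1 / (F + z)^2 \<partial>gamma_distr k l)
        \<le> 100 * ((real n^4 * F + real k * real n^2) / (real n^4 * F^3 + real k^4 * F))"
    unfolding Let_def F_def[symmetric] l_def[symmetric] EI .
qed (simp)

end
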